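(* Let $G$ be a locally compact group with a compact open normal subgroup $A$ such that $G/A$ is isomorphic to an infinite subgroup of the (discrete) group $\mathbb{Q}$ of rational numbers. Then $G$ contains a discrete subgroup $H\cong G/A$ such that $G=AH$ and $A\cap H=\{1\}$, so that $G$ is the semidirect product $A\rtimes H$. *)

theory Defs
  imports "HOL-Analysis.Analysis" "HOL-Algebra.Algebra"
begin

definition topological_group :: "('a, 'b) monoid_scheme \<Rightarrow> 'a topology \<Rightarrow> bool" where
  "topological_group G T \<longleftrightarrow>
     group G \<and> topspace T = carrier G \<and>
     continuous_map (prod_topology T T) T (\<lambda>(x, y). x \<otimes>\<^bsub>G\<^esub> y) \<and>
     continuous_map T T (\<lambda>x. inv\<^bsub>G\<^esub> x)"

definition locally_compact_group :: "('a, 'b) monoid_scheme \<Rightarrow> 'a topology \<Rightarrow> bool" where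
  "locally_compact_group G T \<longleftrightarrow>
     topological_group G T \<and> Hausdorff_space T \<and> locally_compact_space T"

definition rat_add_group :: "rat monoid" where
  "rat_add_group = \<lparr>carrier = UNIV, monoid.mult = (+), one = 0\<rparr>"

end

theory Submission
  imports Defs
begin

lemma rat_group: "group rat_add_group"
  apply (rule groupI) apply (auto simp: rat_add_group_def)
  by (metis add.left_inverse)

lemma rat_inv: "inv\<^bsub>rat_add_group\<^esub> x = - x"
proof -
  interpret group rat_add_group by (rule rat_group)
  show ?thesis
    by (rule inv_equality) (auto simp: rat_add_group_def)
qed

lemma rat_sub_props:
  assumes "subgroup S rat_add_group"
  shows "0 \<in> S" "\<And>x y. x \<in> S \<Longrightarrow> y \<in> S \<Longrightarrow> x + y \<in> S" "\<And>x. x \<in> S \<Longrightarrow> - x \<in> S"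
  using subgroup.one_closed[OF assms] subgroup.m_closed[OF assms] subgroup.m_inv_closed[OF assms]
  by (auto simp: rat_add_group_def rat_inv[unfolded rat_add_group_def])

lemma rat_sub_intmult:
  assumes "subgroup S rat_add_group" "x \<in> S"
  shows "of_int n * x \<in> S"
proof -
  have nat: "of_nat m * x \<in> S" for m
    by (induction m) (auto simp: rat_sub_props[OF assms(1)] assms(2) distrib_right)
  show ?thesis
  proof (cases "n \<ge> 0")
    case True then show ?thesis using nat[of "nat n"] by simp
  next
    case False then show ?thesis using rat_sub_props(3)[OF assms(1) nat[of "nat (-n)"]] by simp
  qed
qed

lemma rat_two_gen:
  assumes "subgroup S rat_add_group" "q \<in> S" "x \<in> S"
  shows "\<exists>q'\<in>S. (\<exists>n::int. q = of_int n * q') \<and> (\<exists>n::int. x = of_int n * q')"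
proof -
  obtain a1 d1 where q1: "quotient_of q = (a1, d1)" by (cases "quotient_of q")
  obtain b1 d2 where x1: "quotient_of x = (b1, d2)" by (cases "quotient_of x")
  have d1: "d1 > 0" using q1 quotient_of_denom_pos by blast
  have d2: "d2 > 0" using x1 quotient_of_denom_pos by blast
  have q: "q = of_int a1 / of_int d1" using q1 quotient_of_div by blast
  have x: "x = of_int b1 / of_int d2" using x1 quotient_of_div by blast
  define D where "D = d1 * d2"
  define a where "a = a1 * d2"
  define b where "b = b1 * d1"
  have D: "D > 0" using d1 d2 by (simp add: D_def)
  have qa: "q = of_int a / of_int D" using q d2 by (simp add: a_def D_def)
  have xb: "x = of_int b / of_int D" using x d1 by (simp add: b_def D_def)
  define g where "g = gcd a b"
  obtain u v where uv: "u * a + v * b = g" using bezout_int unfolding g_def by blast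
  define q' where "q' = of_int g / (of_int D :: rat)"
  have "q' = of_int u * q + of_int v * x"
    unfolding q'_def qa xb uv[symmetric] by (simp add: add_divide_distrib mult.commute)
  hence "q' \<in> S" using rat_sub_props(2)[OF assms(1)] rat_sub_intmult[OF assms(1)] assms by simp
  moreover have "q = of_int (a div g) * q'"
  proof -
    have "a = (a div g) * g" unfolding g_def by simp
    hence "(of_int a :: rat) = of_int (a div g) * of_int g" by (metis of_int_mult)
    thus ?thesis unfolding qa q'_def by simp
  qed
  moreover have "x = of_int (b div g) * q'"
  proof -
    have "b = (b div g) * g" unfolding g_def by simp
    hence "(of_int b :: rat) = of_int (b div g) * of_int g" by (metis of_int_mult)
    thus ?thesis unfolding xb q'_def by simp
  qed
  ultimately show ?thesis by blast
qed

lemma rat_fin_gen: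
  assumes "subgroup S rat_add_group" "finite F" "F \<subseteq> S"
  shows "\<exists>q\<in>S. \<forall>s\<in>F. \<exists>n::int. s = of_int n * q"
  using assms(2,3)
proof (induction F rule: finite_induct)
  case empty then show ?case using rat_sub_props(1)[OF assms(1)] by blast
next
  case (insert x F)
  then obtain q where q: "q \<in> S" "\<forall>s\<in>F. \<exists>n::int. s = of_int n * q" by auto
  obtain q' n1 n2 where q': "q' \<in> S" "q = of_int n1 * q'" "x = of_int n2 * q'"
    using rat_two_gen[OF assms(1) q(1), of x] insert by auto
  have "\<forall>s\<in>insert x F. \<exists>n::int. s = of_int n * q'"
  proof
    fix s assume "s \<in> insert x F"
    then show "\<exists>n::int. s = of_int n * q'"
    proof
      assume "s = x" thus ?thesis using q' by blast
    next
      assume "s \<in> F" then obtain n where "s = of_int n * q" using q by blast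
      hence "s = of_int (n * n1) * q'" using q' by simp
      thus ?thesis by blast
    qed
  qed
  thus ?case using q' by blast
qed

lemma tg_mult_cont:
  fixes G (structure) and Z :: "'c topology"
  assumes "topological_group G T" "continuous_map Z T f" "continuous_map Z T g"
  shows "continuous_map Z T (\<lambda>x. f x \<otimes>\<^bsub>G\<^esub> g x)"
proof -
  have "continuous_map Z T ((\<lambda>(x, y). x \<otimes>\<^bsub>G\<^esub> y) \<circ> (\<lambda>x. (f x, g x)))"
    by (rule continuous_map_compose[OF continuous_map_pairedI[OF assms(2,3)]])
       (use assms(1) in \<open>simp add: topological_group_def\<close>)
  thus ?thesis by (simp add: o_def)
qed

lemma aux4p6:
  fixes G :: "('a, 'b) monoid_scheme" (structure) and T :: "'a topology" and A :: "'a set"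
  assumes "locally_compact_group G T"
    and "A \<lhd> G" and "compactin T A" and "openin T A"
    and "\<exists>S. subgroup S rat_add_group \<and> infinite S \<and>
              G Mod A \<cong> rat_add_group\<lparr>carrier := S\<rparr>"
  shows "\<exists>H. subgroup H G \<and> subtopology T H = discrete_topology H \<and>
             G\<lparr>carrier := H\<rparr> \<cong> G Mod A \<and>
             A <#>\<^bsub>G\<^esub> H = carrier G \<and> A \<inter> H = {\<one>\<^bsub>G\<^esub>}"
proof -
  have tg: "topological_group G T" and haus: "Hausdorff_space T"
    using assms(1) by (auto simp: locally_compact_group_def)
  have grp: "group G" and top: "topspace T = carrier G"
    using tg by (auto simp: topological_group_def)
  interpret group G by (rule grp)
  interpret N: normal A G by (rule assms(2))
  obtain S \<phi> where S: "subgroup S rat_add_group"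
    and \<phi>: "\<phi> \<in> iso (G Mod A) (rat_add_group\<lparr>carrier := S\<rparr>)"
    using assms(5) unfolding is_iso_def by blast
  define R where "R = rat_add_group\<lparr>carrier := S\<rparr>"
  define p where "p = (\<lambda>x. \<phi> (A #> x))"
  have phom: "p \<in> hom G R"
  proof -
    have "compose (carrier G) \<phi> ((#>) A) \<in> hom G R"
      using hom_compose[OF N.r_coset_hom_Mod, of \<phi> R] \<phi> unfolding iso_def R_def by blast
    thus ?thesis unfolding compose_def restrict_def o_def p_def by simp
  qed
  have padd: "p (x \<otimes> y) = p x + p y" if "x \<in> carrier G" "y \<in> carrier G" for x y
    using hom_mult[OF phom that] by (simp add: R_def rat_add_group_def)
  have pS: "p x \<in> S" if "x \<in> carrier G" for x
    using phom that by (auto simp: R_def hom_def Pi_def)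
  have p1: "p \<one> = 0" using padd[of \<one> \<one>] by simp
  have pinv: "p (inv x) = - p x" if "x \<in> carrier G" for x
    using padd[of "inv x" x] that p1 by simp
  have ppow_nat: "p (x [^] (n::nat)) = of_nat n * p x" if "x \<in> carrier G" for x n
    by (induction n) (auto simp: p1 padd that distrib_right)
  have ppow: "p (x [^] (n::int)) = of_int n * p x" if "x \<in> carrier G" for x n
  proof (cases n rule: int_cases)
    case (nonneg m)
    then show ?thesis using that by (simp add: int_pow_int ppow_nat)
  next
    case (neg m)
    have "p (x [^] n) = p (inv (x [^] Suc m))" using neg that by (metis int_pow_neg_int)
    also have "\<dots> = - (of_nat (Suc m) * p x)" using that by (metis pinv ppow_nat nat_pow_closed)
    finally have "p (x [^] n) = - (of_nat (Suc m) * p x)" .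
    moreover have "(of_int n :: rat) = - of_nat (Suc m)" using neg by simp
    ultimately show ?thesis by (metis minus_mult_left)
  qed
  have carrMod: "carrier (G Mod A) = rcosets A" by (simp add: FactGroup_def)
  have \<phi>bij: "bij_betw \<phi> (rcosets A) S" using \<phi> by (simp add: iso_def carrMod)
  have \<phi>A: "\<phi> A = 0"
    using p1 unfolding p_def by (simp add: N.subset)
  have pker: "p x = 0 \<longleftrightarrow> x \<in> A" if x: "x \<in> carrier G" for x
  proof -
    have "A #> x \<in> rcosets A" using x by (auto simp: RCOSETS_def)
    moreover have "A \<in> rcosets A" using N.subgroup_in_rcosets[OF grp] by simp
    ultimately have "p x = 0 \<longleftrightarrow> A #> x = A"
      using \<phi>bij \<phi>A unfolding p_def bij_betw_def inj_on_def by metis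
    also have "\<dots> \<longleftrightarrow> x \<in> A"
      using x N.rcos_const[OF grp] rcos_self[OF x N.subgroup_axioms] by metis
    finally show ?thesis .
  qed
  have psurj: "\<exists>x\<in>carrier G. p x = s" if sS: "s \<in> S" for s
  proof -
    obtain k where "k \<in> rcosets A" "\<phi> k = s" using \<phi>bij sS unfolding bij_betw_def by blast
    thus ?thesis unfolding p_def RCOSETS_def by auto
  qed

  define fib where "fib s = {x \<in> carrier G. p x = s}" for s
  have fib_cpt: "compactin T (fib s)" if sS: "s \<in> S" for s
  proof -
    obtain x0 where x0: "x0 \<in> carrier G" "p x0 = s" using psurj[OF sS] by blast
    have "fib s = (\<lambda>a. a \<otimes> x0) ` A"
    proof
      show "(\<lambda>a. a \<otimes> x0) ` A \<subseteq> fib s"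
        using x0 N.subset pker padd by (auto simp: fib_def)
    next
      show "fib s \<subseteq> (\<lambda>a. a \<otimes> x0) ` A"
      proof
        fix x assume x: "x \<in> fib s"
        hence xc: "x \<in> carrier G" and px: "p x = s" by (auto simp: fib_def)
        have "p (x \<otimes> inv x0) = 0" using xc x0 px padd pinv by simp
        hence "x \<otimes> inv x0 \<in> A" using pker xc x0 by simp
        moreover have "x = (x \<otimes> inv x0) \<otimes> x0" using xc x0 by (simp add: m_assoc)
        ultimately show "x \<in> (\<lambda>a. a \<otimes> x0) ` A" by blast
      qed
    qed
    moreover have "continuous_map T T (\<lambda>a. id a \<otimes> (\<lambda>_. x0) a)"
      by (rule tg_mult_cont[OF tg continuous_map_id]) (simp add: top x0)
    ultimately show ?thesis using image_compactin[OF assms(3)] by simp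
  qed
  have fib_sub: "fib s \<subseteq> topspace T" for s using top by (auto simp: fib_def)
  define Y where "Y = product_topology (\<lambda>s. subtopology T (fib s)) S"
  have topY: "topspace Y = (\<Pi>\<^sub>E s\<in>S. fib s)"
    unfolding Y_def topspace_product_topology using fib_sub by (simp add: Int_absorb1 inf.absorb2)
  have cY: "compact_space Y"
    unfolding Y_def compact_space_product_topology using fib_cpt compact_space_subtopology by blast
  have proj: "continuous_map Y T (\<lambda>f. f s)" if "s \<in> S" for s
    unfolding Y_def by (rule continuous_map_into_fulltopology[OF continuous_map_product_projection[OF that]])
  define C where "C = (\<lambda>(s,t). {f \<in> topspace Y. f (s + t) = f s \<otimes> f t})"
  define U where "U = C ` (S \<times> S)"
  have Uclosed: "\<forall>D\<in>U. closedin Y D"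
  proof
    fix D assume "D \<in> U"
    then obtain s t where st: "s \<in> S" "t \<in> S" "D = C (s,t)" unfolding U_def by auto
    have "s + t \<in> S" using rat_sub_props(2)[OF S st(1,2)] .
    hence "closedin Y {f \<in> topspace Y. f (s + t) = f s \<otimes> f t}"
      by (intro closedin_continuous_maps_eq[OF haus] proj tg_mult_cont[OF tg] st)
    thus "closedin Y D" using st by (simp add: C_def)
  qed
  have Ufip: "\<forall>\<F>. finite \<F> \<and> \<F> \<subseteq> U \<longrightarrow> \<Inter>\<F> \<noteq> {}"
  proof (intro allI impI)
    fix \<F> assume F: "finite \<F> \<and> \<F> \<subseteq> U"
    then obtain P where P: "P \<subseteq> S \<times> S" "finite P" "\<F> = C ` P"
      unfolding U_def by (meson finite_subset_image)
    define F where "F = fst ` P \<union> snd ` P \<union> (\<lambda>(s,t). s + t) ` P"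
    have Ffin: "finite F" using P by (simp add: F_def)
    have FS: "F \<subseteq> S" using P rat_sub_props(2)[OF S] by (auto simp: F_def)
    obtain q where q: "q \<in> S" "\<forall>s\<in>F. \<exists>n::int. s = of_int n * q"
      using rat_fin_gen[OF S Ffin FS] by blast
    define g where "g = (if q = 0 then \<one> else (SOME g. g \<in> carrier G \<and> p g = q))"
    have g: "g \<in> carrier G \<and> p g = q"
    proof (cases "q = 0")
      case True thus ?thesis using p1 by (simp add: g_def)
    next
      case False
      have "\<exists>g. g \<in> carrier G \<and> p g = q" using psurj[OF q(1)] by blast
      hence "(SOME g. g \<in> carrier G \<and> p g = q) \<in> carrier G \<and> p (SOME g. g \<in> carrier G \<and> p g = q) = q"
        by (rule someI_ex)
      thus ?thesis using False by (simp add: g_def)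
    qed
    define \<sigma> where "\<sigma> = (\<lambda>s. if s \<in> S then
        (if \<exists>n::int. s = of_int n * q then g [^] (SOME n::int. s = of_int n * q)
         else (SOME x. x \<in> carrier G \<and> p x = s)) else undefined)"
    have \<sigma>F: "\<sigma> s = g [^] n" if "s \<in> F" "s = of_int n * q" for s n
    proof (cases "q = 0")
      case True thus ?thesis using that FS g by (auto simp: \<sigma>_def g_def)
    next
      case False
      have "\<exists>n::int. s = of_int n * q" using that by blast
      hence "s = of_int (SOME n::int. s = of_int n * q) * q" by (rule someI_ex)
      hence "(SOME n::int. s = of_int n * q) = n" using that False by simp
      thus ?thesis using that FS by (auto simp: \<sigma>_def)
    qed
    have \<sigma>Y: "\<sigma> \<in> topspace Y"
      unfolding topY
    proof
      fix s assume s: "s \<in> S"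
      show "\<sigma> s \<in> fib s"
      proof (cases "\<exists>n::int. s = of_int n * q")
        case True
        hence "s = of_int (SOME n::int. s = of_int n * q) * q" by (rule someI_ex)
        thus ?thesis using True s g ppow by (simp add: \<sigma>_def fib_def)
      next
        case False
        have "\<exists>g. g \<in> carrier G \<and> p g = s" using psurj[OF s] by blast
        hence "(SOME g. g \<in> carrier G \<and> p g = s) \<in> carrier G \<and> p (SOME g. g \<in> carrier G \<and> p g = s) = s"
          by (rule someI_ex)
        thus ?thesis using s False by (simp add: \<sigma>_def fib_def)
      qed
    next
      fix s assume "s \<notin> S" thus "\<sigma> s = undefined" by (simp add: \<sigma>_def)
    qed
    have "\<sigma> \<in> \<Inter>\<F>"
    proof
      fix D assume "D \<in> \<F>"
      then obtain s t where st: "(s,t) \<in> P" "D = C (s,t)" using P by auto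
      have inF: "s \<in> F" "t \<in> F" "s + t \<in> F" using st(1) by (force simp: F_def)+
      obtain n1 n2 n3 where n: "s = of_int n1 * q" "t = of_int n2 * q" "s + t = of_int n3 * q"
        using q(2) inF by meson
      have "\<sigma> (s + t) = \<sigma> s \<otimes> \<sigma> t"
      proof (cases "q = 0")
        case True
        thus ?thesis using \<sigma>F[OF inF(1) n(1)] \<sigma>F[OF inF(2) n(2)] \<sigma>F[OF inF(3) n(3)]
          by (simp add: g_def)
      next
        case False
        have "of_int n3 * q = of_int (n1 + n2) * q" using n by (simp add: distrib_right)
        hence "n3 = n1 + n2" using False by simp
        thus ?thesis using \<sigma>F[OF inF(1) n(1)] \<sigma>F[OF inF(2) n(2)] \<sigma>F[OF inF(3) n(3)] g
          by (simp add: int_pow_mult)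
      qed
      thus "\<sigma> \<in> D" using st \<sigma>Y by (simp add: C_def)
    qed
    thus "\<Inter>\<F> \<noteq> {}" by blast
  qed
  have "\<Inter>U \<noteq> {}" using cY Uclosed Ufip unfolding compact_space_fip by blast
  then obtain \<sigma> where \<sigma>U: "\<sigma> \<in> \<Inter>U" by blast
  have "C (0,0) \<in> U" using rat_sub_props(1)[OF S] by (simp add: U_def)
  hence "\<sigma> \<in> topspace Y" using \<sigma>U by (auto simp: C_def)
  hence \<sigma>c: "\<sigma> s \<in> carrier G" "p (\<sigma> s) = s" if "s \<in> S" for s
    using that by (auto simp: topY fib_def PiE_def Pi_def)
  have \<sigma>m: "\<sigma> (s + t) = \<sigma> s \<otimes> \<sigma> t" if "s \<in> S" "t \<in> S" for s t
  proof -
    have "C (s,t) \<in> U" using that by (simp add: U_def)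
    thus ?thesis using \<sigma>U by (auto simp: C_def)
  qed
  define H where "H = \<sigma> ` S"
  have S0: "0 \<in> S" using rat_sub_props(1)[OF S] .
  have Hc: "H \<subseteq> carrier G" using \<sigma>c by (auto simp: H_def)
  have \<sigma>0: "\<sigma> 0 = \<one>"
  proof -
    have "\<sigma> 0 \<otimes> \<sigma> 0 = \<sigma> 0" using \<sigma>m[OF S0 S0] by simp
    thus ?thesis using \<sigma>c(1)[OF S0] by (metis l_cancel_one)
  qed
  have \<sigma>inv: "inv (\<sigma> s) = \<sigma> (- s)" if s: "s \<in> S" for s
  proof (rule inv_equality)
    have "- s \<in> S" using rat_sub_props(3)[OF S s] .
    thus "\<sigma> (- s) \<otimes> \<sigma> s = \<one>" using \<sigma>m[of "- s" s] s \<sigma>0 by simp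
    show "\<sigma> s \<in> carrier G" using \<sigma>c s by blast
    show "\<sigma> (- s) \<in> carrier G" using \<sigma>c \<open>- s \<in> S\<close> by blast
  qed
  have subH: "subgroup H G"
  proof (rule subgroupI)
    show "H \<subseteq> carrier G" by (rule Hc)
    show "H \<noteq> {}" using S0 by (auto simp: H_def)
    show "inv a \<in> H" if "a \<in> H" for a
      using that \<sigma>inv rat_sub_props(3)[OF S] by (auto simp: H_def)
    show "a \<otimes> b \<in> H" if "a \<in> H" "b \<in> H" for a b
      using that \<sigma>m rat_sub_props(2)[OF S] by (auto simp: H_def) (metis image_eqI)
  qed
  have AH: "A \<inter> H = {\<one>}"
  proof
    show "A \<inter> H \<subseteq> {\<one>}"
    proof
      fix x assume "x \<in> A \<inter> H"
      then obtain s where s: "s \<in> S" "x = \<sigma> s" "\<sigma> s \<in> A" by (auto simp: H_def)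
      hence "s = 0" using pker \<sigma>c by metis
      thus "x \<in> {\<one>}" using s \<sigma>0 by simp
    qed
    show "{\<one>} \<subseteq> A \<inter> H" using N.one_closed S0 \<sigma>0 by (auto simp: H_def) (metis image_eqI)
  qed
  have AHG: "A <#> H = carrier G"
  proof
    show "A <#> H \<subseteq> carrier G" using N.subset Hc by (auto simp: set_mult_def)
    show "carrier G \<subseteq> A <#> H"
    proof
      fix x assume x: "x \<in> carrier G"
      define h where "h = \<sigma> (p x)"
      have hc: "h \<in> carrier G" "p h = p x" using \<sigma>c pS[OF x] by (auto simp: h_def)
      have hH: "h \<in> H" using pS[OF x] by (simp add: H_def h_def)
      have "p (x \<otimes> inv h) = 0" using x hc padd pinv by simp
      hence a: "x \<otimes> inv h \<in> A" using pker x hc by simp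
      have "x = (x \<otimes> inv h) \<otimes> h" using x hc by (simp add: m_assoc)
      thus "x \<in> A <#> H" using a hH by (auto simp: set_mult_def)
    qed
  qed
  have disc: "subtopology T H = discrete_topology H"
  proof -
    have "discrete_topology H = subtopology T H"
      unfolding discrete_topology_unique
    proof
      show "topspace (subtopology T H) = H" using Hc top by auto
      show "\<forall>x\<in>H. openin (subtopology T H) {x}"
      proof
        fix h assume hH: "h \<in> H"
        hence hc: "h \<in> carrier G" using Hc by blast
        have cont: "continuous_map T T (\<lambda>a. id a \<otimes> (\<lambda>_. inv h) a)"
          by (rule tg_mult_cont[OF tg continuous_map_id]) (simp add: top hc)
        define V where "V = {x \<in> topspace T. id x \<otimes> (\<lambda>_. inv h) x \<in> A}"
        have "openin T V" unfolding V_def by (rule openin_continuous_map_preimage[OF cont assms(4)])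
        moreover have "{h} = V \<inter> H"
        proof
          show "{h} \<subseteq> V \<inter> H" using hH hc top N.one_closed by (auto simp: V_def)
          show "V \<inter> H \<subseteq> {h}"
          proof
            fix x assume x: "x \<in> V \<inter> H"
            hence xc: "x \<in> carrier G" using Hc by blast
            have "x \<otimes> inv h \<in> H" using x hH subgroup.m_closed[OF subH] subgroup.m_inv_closed[OF subH] by blast
            moreover have "x \<otimes> inv h \<in> A" using x by (simp add: V_def)
            ultimately have "x \<otimes> inv h = \<one>" using AH by blast
            hence "x = h" using xc hc by (metis inv_equality inv_inv inv_closed)
            thus "x \<in> {h}" by simp
          qed
        qed
        ultimately show "openin (subtopology T H) {h}" unfolding openin_subtopology by blast
      qed
    qed
    thus ?thesis by simp
  qed
  have isoH: "G\<lparr>carrier := H\<rparr> \<cong> R"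
  proof -
    have "p \<in> iso (G\<lparr>carrier := H\<rparr>) R"
      unfolding iso_def hom_def
    proof (intro CollectI conjI)
      show "p \<in> carrier (G\<lparr>carrier := H\<rparr>) \<rightarrow> carrier R" using pS Hc by (auto simp: R_def)
      show "\<forall>x\<in>carrier (G\<lparr>carrier := H\<rparr>). \<forall>y\<in>carrier (G\<lparr>carrier := H\<rparr>).
          p (x \<otimes>\<^bsub>G\<lparr>carrier := H\<rparr>\<^esub> y) = p x \<otimes>\<^bsub>R\<^esub> p y"
        using padd Hc by (auto simp: R_def rat_add_group_def)
      show "bij_betw p (carrier (G\<lparr>carrier := H\<rparr>)) (carrier R)"
        unfolding bij_betw_def inj_on_def
        using \<sigma>c by (auto simp: R_def H_def image_iff)
    qed
    thus ?thesis by (auto simp: is_iso_def)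
  qed
  have "R \<cong> G Mod A"
    using group.iso_sym[OF N.factorgroup_is_group] \<phi> unfolding R_def is_iso_def by blast
  hence "G\<lparr>carrier := H\<rparr> \<cong> G Mod A" using isoH iso_trans by blast
  thus ?thesis using subH disc AHG AH by blast
qed

theorem theorem4p6:
  fixes G :: "('a, 'b) monoid_scheme" and T :: "'a topology" and A :: "'a set"
  assumes "locally_compact_group G T"
    and "A \<lhd> G" and "compactin T A" and "openin T A"
    and "\<exists>S. subgroup S rat_add_group \<and> infinite S \<and>
              G Mod A \<cong> rat_add_group\<lparr>carrier := S\<rparr>"
  shows "\<exists>H. subgroup H G \<and> subtopology T H = discrete_topology H \<and>
             G\<lparr>carrier := H\<rparr> \<cong> G Mod A \<and>
             A <#>\<^bsub>G\<^esub> H = carrier G \<and> A \<inter> H = {\<one>\<^bsub>G\<^esub>}"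
  using aux4p6[OF assms] .

end
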